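(* Assume the Bellman setting below and hypotheses (H1), (H3), (H4). Then the Bellman problem $\sup_{P\in\mathcal P}\{-A(P)U+y(P)\}=0$ has at most one solution $U\in\mathbb R^{M+1}$.
   Context: Bellman setting: Let $M\ge 0$ be an integer and $\mathcal P=\mathcal P_0\times\cdots\times\mathcal P_M$ a product of nonempty sets; write $P=(P_0,\dots,P_M)\in\mathcal P$. Let $A:\mathcal P\to\mathbb R^{(M+1)\times(M+1)}$ and $y:\mathcal P\to\mathbb R^{M+1}$ be row-decoupled: for each $i$, the $i$-th row of $A(P)$ and the $i$-th entry of $y(P)$ depend only on $P_i$. Inequalities between vectors are entrywise and suprema of families of vectors are entrywise. The Bellman problem is to find $U$ with $\sup_{P\in\mathcal P}\{-A(P)U+y(P)\}=0$. Row $i$ of a matrix $(a_{ij})$ is strictly diagonally dominant (s.d.d.) if $|a_{ii}|>\sum_{j\ne i}|a_{ij}|$, weakly diagonally dominant (w.d.d.) if $|a_{ii}|\ge\sum_{j\ne i}|a_{ij}|$; a matrix is w.d.d. if all rows are. A Z-matrix is a real matrix with nonpositive off-diagonal entries. (H1): $P\mapsto A(P)^{-1}$ is bounded on $\{P: A(P)\text{ nonsingular}\}$. (H3): for each $P$, $A(P)$ is a w.d.d. Z-matrix with nonnegative diagonal entries, and $[A(P)]_{ii}\le1$ whenever row $i$ of $A(P)$ is not s.d.d. Define $[\hat y(P)]_i=[y(P)]_i$ if row $i$ of $A(P)$ is not s.d.d. and $[\hat y(P)]_i=-\infty$ otherwise, and the operator $\mathbb M$ on vectors with entries in $[-\infty,\infty)$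 by $[\mathbb M X]_i=\sup_{P\in\mathcal P}\{(1-[A(P)]_{ii})X_i-\sum_{j\ne i}[A(P)]_{ij}X_j+[\hat y(P)]_i\}$ (i.e. $\mathbb M=I+\mathbb A$ with $\mathbb AU=\sup_P\{-A(P)U+\hat y(P)\}$), with the conventions $0\cdot(-\infty)=0$ and that any sum containing $-\infty$ equals $-\infty$; $\mathbb M^0=I$, $\mathbb M^k=\mathbb M\circ\mathbb M^{k-1}$. (H4): for each $U\in\mathbb R^{M+1}$ and each $i\in\{0,\dots,M\}$ there exist integers $0\le m_1<m_2$ with $[\mathbb M^{m_1}U]_i>[\mathbb M^{m_2}U]_i$. *)

theory Defs
  imports "HOL-Analysis.Analysis" "HOL-Library.Extended_Real"
begin

text \<open>Indices 0..M are modelled by a finite type 'n; vectors are real^'n,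
 matrices real^'n^'n (row i of A is A $ i). A control P is a function
 'n => 'c with P i in Ps i, i.e. P ranges over Pi UNIV Ps.\<close>

definition sdd_row :: "real^'n^'n \<Rightarrow> 'n \<Rightarrow> bool" where
  "sdd_row A i \<longleftrightarrow> \<bar>A $ i $ i\<bar> > (\<Sum>j\<in>UNIV - {i}. \<bar>A $ i $ j\<bar>)"

definition wdd_row :: "real^'n^'n \<Rightarrow> 'n \<Rightarrow> bool" where
  "wdd_row A i \<longleftrightarrow> \<bar>A $ i $ i\<bar> \<ge> (\<Sum>j\<in>UNIV - {i}. \<bar>A $ i $ j\<bar>)"

definition wdd :: "real^'n^'n \<Rightarrow> bool" where
  "wdd A \<longleftrightarrow> (\<forall>i. wdd_row A i)"

definition Z_matrix :: "real^'n^'n \<Rightarrow> bool" where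
  "Z_matrix A \<longleftrightarrow> (\<forall>i j. i \<noteq> j \<longrightarrow> A $ i $ j \<le> 0)"

definition row_decoupled ::
  "('n \<Rightarrow> 'c set) \<Rightarrow> (('n \<Rightarrow> 'c) \<Rightarrow> real^'n^'n) \<Rightarrow> (('n \<Rightarrow> 'c) \<Rightarrow> real^'n) \<Rightarrow> bool" where
  "row_decoupled Ps A y \<longleftrightarrow>
     (\<forall>P\<in>Pi UNIV Ps. \<forall>Q\<in>Pi UNIV Ps. \<forall>i. P i = Q i \<longrightarrow> A P $ i = A Q $ i \<and> y P $ i = y Q $ i)"

definition bellman_solution ::
  "('n \<Rightarrow> 'c set) \<Rightarrow> (('n \<Rightarrow> 'c) \<Rightarrow> real^'n^'n) \<Rightarrow> (('n \<Rightarrow> 'c) \<Rightarrow> real^'n) \<Rightarrow> real^'n \<Rightarrow> bool" where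
  "bellman_solution Ps A y U \<longleftrightarrow>
     (\<forall>i. (SUP P\<in>Pi UNIV Ps. ereal ((- (A P *v U) + y P) $ i)) = 0)"

definition H1 :: "('n \<Rightarrow> 'c set) \<Rightarrow> (('n \<Rightarrow> 'c) \<Rightarrow> real^'n^'n) \<Rightarrow> bool" where
  "H1 Ps A \<longleftrightarrow> bounded ((\<lambda>P. matrix_inv (A P)) ` {P\<in>Pi UNIV Ps. invertible (A P)})"

definition H3 :: "('n \<Rightarrow> 'c set) \<Rightarrow> (('n \<Rightarrow> 'c) \<Rightarrow> real^'n^'n) \<Rightarrow> bool" where
  "H3 Ps A \<longleftrightarrow> (\<forall>P\<in>Pi UNIV Ps. wdd (A P) \<and> Z_matrix (A P) \<and> (\<forall>i. A P $ i $ i \<ge> 0)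
       \<and> (\<forall>i. \<not> sdd_row (A P) i \<longrightarrow> A P $ i $ i \<le> 1))"

definition yhat :: "(('n \<Rightarrow> 'c) \<Rightarrow> real^'n^'n) \<Rightarrow> (('n \<Rightarrow> 'c) \<Rightarrow> real^'n) \<Rightarrow> ('n \<Rightarrow> 'c) \<Rightarrow> 'n \<Rightarrow> ereal" where
  "yhat A y P i = (if sdd_row (A P) i then -\<infinity> else ereal (y P $ i))"

text \<open>Coefficient of X_j in row i of I - A(P).  Note 0 * (-\<infinity>) = 0 in ereal.\<close>
definition Mcoef :: "(('n \<Rightarrow> 'c) \<Rightarrow> real^'n^'n) \<Rightarrow> ('n \<Rightarrow> 'c) \<Rightarrow> 'n \<Rightarrow> 'n \<Rightarrow> ereal" where
  "Mcoef A P i j = ereal ((if j = i then 1 else 0) - A P $ i $ j)"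

text \<open>The operator M = I + \<A>; a sum containing -\<infinity> is -\<infinity> by convention.\<close>
definition bellman_M ::
  "('n \<Rightarrow> 'c set) \<Rightarrow> (('n \<Rightarrow> 'c) \<Rightarrow> real^'n^'n) \<Rightarrow> (('n \<Rightarrow> 'c) \<Rightarrow> real^'n)
     \<Rightarrow> ('n \<Rightarrow> ereal) \<Rightarrow> ('n \<Rightarrow> ereal)" where
  "bellman_M Ps A y X i =
     (SUP P\<in>Pi UNIV Ps.
        (if yhat A y P i = -\<infinity> \<or> (\<exists>j. Mcoef A P i j * X j = -\<infinity>) then -\<infinity>
         else (\<Sum>j\<in>UNIV. Mcoef A P i j * X j) + yhat A y P i))"

definition H4 :: "('n \<Rightarrow> 'c set) \<Rightarrow> (('n \<Rightarrow> 'c) \<Rightarrow> real^'n^'n) \<Rightarrow> (('n \<Rightarrow> 'c) \<Rightarrow> real^'n) \<Rightarrow> bool" where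
  "H4 Ps A y \<longleftrightarrow> (\<forall>U :: real^'n. \<forall>i. \<exists>m1 m2 :: nat. m1 < m2 \<and>
      ((bellman_M Ps A y ^^ m1) (\<lambda>j. ereal (U $ j))) i > ((bellman_M Ps A y ^^ m2) (\<lambda>j. ereal (U $ j))) i)"

end

theory Submission
  imports Defs
begin

lemma rowsum_eq:
  fixes A :: "real^'n::finite^'n"
  assumes Z: "Z_matrix A"
  shows "(\<Sum>j\<in>UNIV. A$i$j) = A$i$i - (\<Sum>j\<in>UNIV-{i}. \<bar>A$i$j\<bar>)"
proof -
  have "(\<Sum>j\<in>UNIV. A$i$j) = A$i$i + (\<Sum>j\<in>UNIV-{i}. A$i$j)"
    by (simp add: sum.remove)
  also have "(\<Sum>j\<in>UNIV-{i}. A$i$j) = (\<Sum>j\<in>UNIV-{i}. - \<bar>A$i$j\<bar>)"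
    using Z unfolding Z_matrix_def by (intro sum.cong) auto
  finally show ?thesis by (simp add: sum_negf)
qed

lemma rowsum_nonsdd:
  fixes A :: "real^'n::finite^'n"
  assumes "Z_matrix A" "wdd_row A i" "A$i$i \<ge> 0" "\<not> sdd_row A i"
  shows "(\<Sum>j\<in>UNIV. A$i$j) = 0"
  using rowsum_eq[OF assms(1), of i] assms(2-4) unfolding wdd_row_def sdd_row_def by auto

lemma rowsum_sdd:
  fixes A :: "real^'n::finite^'n"
  assumes "Z_matrix A" "A$i$i \<ge> 0" "sdd_row A i"
  shows "(\<Sum>j\<in>UNIV. A$i$j) > 0"
  using rowsum_eq[OF assms(1), of i] assms(2-3) unfolding sdd_row_def by auto

lemma coef_sum:
  fixes B :: "real^'n::finite^'n"
  shows "(\<Sum>j\<in>UNIV. ((if j = i then 1 else 0) - B$i$j) * w j) = w i - (\<Sum>j\<in>UNIV. B$i$j * w j)"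
  by (simp add: left_diff_distrib sum_subtractf if_distrib[where f="\<lambda>a. a * w _"] cong: if_cong)

lemma max_principle:
  fixes A :: "real^'n::finite^'n" and x :: "real^'n"
  assumes wdd: "wdd A" and Z: "Z_matrix A" and diag: "\<forall>i. A$i$i \<ge> 0"
    and cond: "\<forall>J. J \<noteq> {} \<longrightarrow> (\<exists>i\<in>J. sdd_row A i \<or> (\<exists>j. j \<notin> J \<and> A$i$j \<noteq> 0))"
    and le: "\<forall>i. (A *v x)$i \<le> 0"
  shows "x$k \<le> 0"
proof (rule ccontr)
  assume nk: "\<not> x$k \<le> 0"
  define c where "c = Max (range (\<lambda>i. x$i))"
  have cge: "x$j \<le> c" for j unfolding c_def by (rule Max_ge) auto
  have cpos: "c > 0" using cge[of k] nk by linarith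
  define J where "J = {i. x$i = c}"
  have "c \<in> range (\<lambda>i. x$i)" unfolding c_def by (rule Max_in) auto
  then have "J \<noteq> {}" unfolding J_def by auto
  then obtain i where iJ: "i \<in> J" and alt: "sdd_row A i \<or> (\<exists>j. j \<notin> J \<and> A$i$j \<noteq> 0)"
    using cond by blast
  have xi: "x$i = c" using iJ J_def by auto
  have eq: "(A *v x)$i = c * (\<Sum>j\<in>UNIV. A$i$j) + (\<Sum>j\<in>UNIV. A$i$j * (x$j - c))"
    by (simp add: matrix_vector_mult_def sum_distrib_left sum.distrib[symmetric] algebra_simps)
  have tn: "A$i$j * (x$j - c) \<ge> 0" for j
  proof (cases "j = i")
    case True then show ?thesis using xi by simp
  next
    case False
    then have "A$i$j \<le> 0" using Z unfolding Z_matrix_def by auto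
    moreover have "x$j - c \<le> 0" using cge[of j] by simp
    ultimately show ?thesis by (simp add: mult_nonpos_nonpos)
  qed
  have s0: "(\<Sum>j\<in>UNIV. A$i$j * (x$j - c)) \<ge> 0" using tn by (simp add: sum_nonneg)
  have r0: "(\<Sum>j\<in>UNIV. A$i$j) \<ge> 0"
  proof (cases "sdd_row A i")
    case True then show ?thesis using rowsum_sdd[OF Z] diag by (simp add: less_imp_le)
  next
    case False then show ?thesis using rowsum_nonsdd[OF Z] diag wdd unfolding wdd_def by simp
  qed
  from alt show False
  proof
    assume "sdd_row A i"
    then have "(\<Sum>j\<in>UNIV. A$i$j) > 0" using rowsum_sdd[OF Z] diag by simp
    then have "c * (\<Sum>j\<in>UNIV. A$i$j) > 0" using cpos by simp
    then show False using eq s0 le by (smt (verit))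
  next
    assume "\<exists>j. j \<notin> J \<and> A$i$j \<noteq> 0"
    then obtain j where jJ: "j \<notin> J" and aj: "A$i$j \<noteq> 0" by blast
    have "j \<noteq> i" using jJ iJ by auto
    then have "A$i$j \<le> 0" using Z unfolding Z_matrix_def by auto
    then have "A$i$j < 0" using aj by linarith
    moreover have "x$j < c" using cge[of j] jJ unfolding J_def by force
    ultimately have "A$i$j * (x$j - c) > 0" by (simp add: mult_neg_neg)
    moreover have "A$i$j * (x$j - c) \<le> (\<Sum>j\<in>UNIV. A$i$j * (x$j - c))"
      by (rule member_le_sum) (use tn in auto)
    ultimately show False using eq r0 cpos le
      by (smt (verit) mult_nonneg_nonneg)
  qed
qed


context
  fixes Ps :: "'n::finite \<Rightarrow> 'c set"
    and A :: "('n \<Rightarrow> 'c) \<Rightarrow> real^'n^'n"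
    and y :: "('n \<Rightarrow> 'c) \<Rightarrow> real^'n"
  assumes h3: "H3 Ps A"
begin

lemma coef_nonneg:
  assumes "P \<in> Pi UNIV Ps" "\<not> sdd_row (A P) i"
  shows "Mcoef A P i j \<ge> 0"
  using h3 assms unfolding H3_def Z_matrix_def Mcoef_def by (cases "j = i") auto

lemma term_mono:
  assumes P: "P \<in> Pi UNIV Ps" and XY: "\<And>j. X j \<le> Y j"
  shows "(if yhat A y P i = -\<infinity> \<or> (\<exists>j. Mcoef A P i j * X j = -\<infinity>) then -\<infinity>
         else (\<Sum>j\<in>UNIV. Mcoef A P i j * X j) + yhat A y P i)
       \<le> (if yhat A y P i = -\<infinity> \<or> (\<exists>j. Mcoef A P i j * Y j = -\<infinity>) then -\<infinity>
         else (\<Sum>j\<in>UNIV. Mcoef A P i j * Y j) + yhat A y P i)"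
proof (cases "yhat A y P i = -\<infinity> \<or> (\<exists>j. Mcoef A P i j * X j = -\<infinity>)")
  case True then show ?thesis by simp
next
  case False
  then have ns: "\<not> sdd_row (A P) i" by (auto simp: yhat_def)
  have c0: "\<And>j. Mcoef A P i j \<ge> 0" using coef_nonneg[OF P ns] .
  have mono: "\<And>j. Mcoef A P i j * X j \<le> Mcoef A P i j * Y j"
    using c0 XY by (simp add: ereal_mult_left_mono)
  have nY: "\<not> (\<exists>j. Mcoef A P i j * Y j = -\<infinity>)"
  proof
    assume "\<exists>j. Mcoef A P i j * Y j = -\<infinity>"
    then obtain j where "Mcoef A P i j * Y j = -\<infinity>" by blast
    with mono[of j] have "Mcoef A P i j * X j = -\<infinity>" by simp
    with False show False by blast
  qed
  have "(\<Sum>j\<in>UNIV. Mcoef A P i j * X j) \<le> (\<Sum>j\<in>UNIV. Mcoef A P i j * Y j)"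
    by (rule sum_mono) (rule mono)
  then have le: "(\<Sum>j\<in>UNIV. Mcoef A P i j * X j) + yhat A y P i \<le> (\<Sum>j\<in>UNIV. Mcoef A P i j * Y j) + yhat A y P i"
    by (rule add_right_mono)
  have cY: "\<not> (yhat A y P i = -\<infinity> \<or> (\<exists>j. Mcoef A P i j * Y j = -\<infinity>))" using False nY by blast
  show ?thesis unfolding if_not_P[OF False] if_not_P[OF cY] by (rule le)
qed

lemma M_mono:
  assumes "\<And>j. X j \<le> Y j"
  shows "bellman_M Ps A y X i \<le> bellman_M Ps A y Y i"
  unfolding bellman_M_def
  apply (rule SUP_mono)
  apply (rule bexI)
   apply (rule term_mono)
    apply assumption
   apply (rule assms)
  apply assumption
  done

lemma M_le_sol:
  assumes Usol: "bellman_solution Ps A y U"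
  shows "bellman_M Ps A y (\<lambda>j. ereal (U$j)) i \<le> ereal (U$i)"
  unfolding bellman_M_def
proof (rule SUP_least)
  fix P assume P: "P \<in> Pi UNIV Ps"
  have "ereal ((- (A P *v U) + y P) $ i) \<le> (SUP Q\<in>Pi UNIV Ps. ereal ((- (A Q *v U) + y Q) $ i))"
    by (rule SUP_upper) (rule P)
  also have "\<dots> = 0" using Usol unfolding bellman_solution_def by blast
  finally have v: "ereal ((- (A P *v U) + y P) $ i) \<le> 0" .
  show "(if yhat A y P i = -\<infinity> \<or> (\<exists>j. Mcoef A P i j * ereal (U$j) = -\<infinity>) then -\<infinity>
         else (\<Sum>j\<in>UNIV. Mcoef A P i j * ereal (U$j)) + yhat A y P i) \<le> ereal (U$i)"
  proof (cases "sdd_row (A P) i")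
    case True then show ?thesis by (simp add: yhat_def)
  next
    case False
    have "(\<Sum>j\<in>UNIV. Mcoef A P i j * ereal (U$j)) + yhat A y P i
        = ereal ((\<Sum>j\<in>UNIV. ((if j = i then 1 else 0) - A P$i$j) * U$j) + y P $ i)"
      using False by (simp add: yhat_def Mcoef_def sum_ereal)
    also have "\<dots> = ereal (U$i + (- (A P *v U) + y P) $ i)"
      using coef_sum[of i "A P" "\<lambda>j. U$j"] by (simp add: matrix_vector_mult_def)
    also have "\<dots> \<le> ereal (U$i)" using v by simp
    finally show ?thesis by simp
  qed
qed

lemma iter_le_sol:
  assumes Usol: "bellman_solution Ps A y U"
  shows "(bellman_M Ps A y ^^ k) (\<lambda>j. ereal (U$j)) i \<le> ereal (U$i)"
proof (induction k arbitrary: i)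
  case 0 then show ?case by simp
next
  case (Suc k)
  have "(bellman_M Ps A y ^^ Suc k) (\<lambda>j. ereal (U$j)) i
      = bellman_M Ps A y ((bellman_M Ps A y ^^ k) (\<lambda>j. ereal (U$j))) i" by simp
  also have "\<dots> \<le> bellman_M Ps A y (\<lambda>j. ereal (U$j)) i"
    by (rule M_mono) (rule Suc.IH)
  also have "\<dots> \<le> ereal (U$i)" by (rule M_le_sol[OF Usol])
  finally show ?case .
qed


lemma lower:
  assumes P: "P \<in> Pi UNIV Ps"
    and J: "\<forall>i\<in>J. \<not> sdd_row (A P) i \<and> (\<forall>j. j \<notin> J \<longrightarrow> A P $ i $ j = 0)"
    and opt: "\<forall>i\<in>J. (- (A P *v U) + y P)$i \<ge> -e"
  shows "\<forall>i\<in>J. (bellman_M Ps A y ^^ k) (\<lambda>j. ereal (U$j)) i \<ge> ereal (U$i - real k * e)"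
proof (induction k)
  case 0 show ?case by simp
next
  case (Suc k)
  define X where "X = (bellman_M Ps A y ^^ k) (\<lambda>j. ereal (U$j))"
  have XL: "\<And>j. j \<in> J \<Longrightarrow> X j \<ge> ereal (U$j - real k * e)" using Suc.IH X_def by simp
  show ?case
  proof
    fix i assume iJ: "i \<in> J"
    have ns: "\<not> sdd_row (A P) i" and zero: "\<And>j. j \<notin> J \<Longrightarrow> A P $ i $ j = 0" using J iJ by auto
    have wr: "wdd_row (A P) i" and Zm: "Z_matrix (A P)" and dg: "A P $ i $ i \<ge> 0"
      using h3 P unfolding H3_def wdd_def by auto
    have rs: "(\<Sum>j\<in>UNIV. A P $ i $ j) = 0" by (rule rowsum_nonsdd[OF Zm wr dg ns])
    have yh: "yhat A y P i = ereal (y P $ i)" by (simp add: yhat_def ns)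
    have c0: "\<And>j. Mcoef A P i j \<ge> 0" using coef_nonneg[OF P ns] .
    define L where "L j = (if j \<in> J then U$j - real k * e else 0)" for j
    have tl: "Mcoef A P i j * X j \<ge> ereal (((if j = i then 1 else 0) - A P$i$j) * L j)" for j
    proof (cases "j \<in> J")
      case True
      have "ereal (((if j = i then 1 else 0) - A P$i$j) * L j) = Mcoef A P i j * ereal (L j)"
        by (simp add: Mcoef_def)
      also have "\<dots> \<le> Mcoef A P i j * X j"
        using True XL[OF True] c0[of j] unfolding L_def by (simp add: ereal_mult_left_mono)
      finally show ?thesis .
    next
      case False
      then have "j \<noteq> i" using iJ by auto
      then show ?thesis using zero[OF False] by (simp add: Mcoef_def zero_ereal_def[symmetric])
    qed
    have nm: "\<not> (\<exists>j. Mcoef A P i j * X j = -\<infinity>)"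
    proof
      assume "\<exists>j. Mcoef A P i j * X j = -\<infinity>"
      then obtain j where "Mcoef A P i j * X j = -\<infinity>" by blast
      with tl[of j] show False by simp
    qed
    have cond: "\<not> (yhat A y P i = -\<infinity> \<or> (\<exists>j. Mcoef A P i j * X j = -\<infinity>))" using nm yh by simp
    have real_ineq: "U$i - real (Suc k) * e \<le> (\<Sum>j\<in>UNIV. ((if j = i then 1 else 0) - A P$i$j) * L j) + y P $ i"
    proof -
      have s1: "(\<Sum>j\<in>UNIV. ((if j = i then 1 else 0) - A P$i$j) * L j) = L i - (\<Sum>j\<in>UNIV. A P$i$j * L j)"
        by (rule coef_sum)
      have s2: "(\<Sum>j\<in>UNIV. A P$i$j * L j) = (\<Sum>j\<in>UNIV. A P$i$j * U$j) - real k * e * (\<Sum>j\<in>UNIV. A P $ i $ j)"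
      proof -
        have "(\<Sum>j\<in>UNIV. A P$i$j * L j) = (\<Sum>j\<in>UNIV. A P$i$j * U$j - real k * e * A P $ i $ j)"
          by (rule sum.cong) (auto simp: L_def zero algebra_simps)
        then show ?thesis by (simp add: sum_subtractf sum_distrib_left)
      qed
      have "(- (A P *v U) + y P)$i \<ge> -e" using opt iJ by auto
      then have "y P $ i \<ge> (\<Sum>j\<in>UNIV. A P$i$j * U$j) - e" by (simp add: matrix_vector_mult_def)
      then show ?thesis using s1 s2 rs iJ by (simp add: L_def algebra_simps)
    qed
    have "ereal (U$i - real (Suc k) * e) \<le> ereal ((\<Sum>j\<in>UNIV. ((if j = i then 1 else 0) - A P$i$j) * L j) + y P $ i)"
      using real_ineq by simp
    also have "\<dots> = ereal (\<Sum>j\<in>UNIV. ((if j = i then 1 else 0) - A P$i$j) * L j) + ereal (y P $ i)" by simp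
    also have "\<dots> \<le> (\<Sum>j\<in>UNIV. Mcoef A P i j * X j) + yhat A y P i"
    proof -
      have "ereal (\<Sum>j\<in>UNIV. ((if j = i then 1 else 0) - A P$i$j) * L j) = (\<Sum>j\<in>UNIV. ereal (((if j = i then 1 else 0) - A P$i$j) * L j))"
        by (simp add: sum_ereal)
      also have "\<dots> \<le> (\<Sum>j\<in>UNIV. Mcoef A P i j * X j)" by (rule sum_mono) (rule tl)
      finally have "ereal (\<Sum>j\<in>UNIV. ((if j = i then 1 else 0) - A P$i$j) * L j) \<le> (\<Sum>j\<in>UNIV. Mcoef A P i j * X j)" .
      then show ?thesis unfolding yh by (rule add_right_mono)
    qed
    also have "\<dots> = (if yhat A y P i = -\<infinity> \<or> (\<exists>j. Mcoef A P i j * X j = -\<infinity>) then -\<infinity>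
         else (\<Sum>j\<in>UNIV. Mcoef A P i j * X j) + yhat A y P i)"
      unfolding if_not_P[OF cond] ..
    also have "\<dots> \<le> bellman_M Ps A y X i"
      unfolding bellman_M_def by (rule SUP_upper) (rule P)
    also have "\<dots> = (bellman_M Ps A y ^^ Suc k) (\<lambda>j. ereal (U$j)) i" by (simp add: X_def)
    finally show "(bellman_M Ps A y ^^ Suc k) (\<lambda>j. ereal (U$j)) i \<ge> ereal (U$i - real (Suc k) * e)" .
  qed
qed

end



lemma eps_exists:
  fixes Ps :: "'n::finite \<Rightarrow> 'c set"
    and A :: "('n \<Rightarrow> 'c) \<Rightarrow> real^'n^'n"
    and y :: "('n \<Rightarrow> 'c) \<Rightarrow> real^'n"
  assumes h3: "H3 Ps A" and h4: "H4 Ps A y" and Usol: "bellman_solution Ps A y U"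
  shows "\<exists>e0>0. \<forall>e. 0 < e \<longrightarrow> e \<le> e0 \<longrightarrow> (\<forall>P\<in>Pi UNIV Ps. \<forall>J.
     (\<forall>i\<in>J. \<not> sdd_row (A P) i \<and> (\<forall>j. j \<notin> J \<longrightarrow> A P $ i $ j = 0)) \<longrightarrow>
     (\<forall>i\<in>J. (- (A P *v U) + y P)$i \<ge> -e) \<longrightarrow> J = {})"
proof -
  let ?u = "\<lambda>j. ereal (U$j)"
  let ?Q = "\<lambda>i e. e > 0 \<and> (\<forall>e'. 0 < e' \<longrightarrow> e' \<le> e \<longrightarrow> (\<forall>P\<in>Pi UNIV Ps. \<forall>J. i \<in> J \<longrightarrow>
     (\<forall>i\<in>J. \<not> sdd_row (A P) i \<and> (\<forall>j. j \<notin> J \<longrightarrow> A P $ i $ j = 0)) \<longrightarrow>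
     (\<forall>i\<in>J. (- (A P *v U) + y P)$i \<ge> -e') \<longrightarrow> False))"
  have each: "\<exists>e. ?Q i e" for i
  proof -
    obtain m1 m2 :: nat where m: "m1 < m2"
      and gt: "(bellman_M Ps A y ^^ m1) ?u i > (bellman_M Ps A y ^^ m2) ?u i"
      using h4 unfolding H4_def by blast
    have "(bellman_M Ps A y ^^ m1) ?u i \<le> ereal (U$i)" by (rule iter_le_sol[OF h3 Usol])
    with gt have "(bellman_M Ps A y ^^ m2) ?u i < ereal (U$i)" by simp
    then obtain r where r1: "(bellman_M Ps A y ^^ m2) ?u i < ereal r" and r2: "ereal r < ereal (U$i)"
      using ereal_dense2 by blast
    define e where "e = (U$i - r) / real m2"
    have m2pos: "real m2 > 0" using m by simp
    have epos: "e > 0" using r2 m2pos by (simp add: e_def)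
    have contra: "False" if e': "0 < e'" "e' \<le> e" and P: "P \<in> Pi UNIV Ps" and iJ: "i \<in> J"
      and Jc: "\<forall>i\<in>J. \<not> sdd_row (A P) i \<and> (\<forall>j. j \<notin> J \<longrightarrow> A P $ i $ j = 0)"
      and opt: "\<forall>i\<in>J. (- (A P *v U) + y P)$i \<ge> -e'" for e' P J
    proof -
      have lo: "ereal (U$i - real m2 * e') \<le> (bellman_M Ps A y ^^ m2) ?u i"
        using lower[where Ps=Ps and A=A and y=y and P=P and J=J and U=U and e=e' and k=m2, OF h3 P Jc opt] iJ by blast
      have "real m2 * e' \<le> real m2 * e" using e' m2pos by simp
      also have "\<dots> = U$i - r" using m2pos by (simp add: e_def)
      finally have "r \<le> U$i - real m2 * e'" by simp
      then have "ereal r \<le> ereal (U$i - real m2 * e')" by simp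
      then have "ereal r \<le> (bellman_M Ps A y ^^ m2) ?u i" using lo by (rule order.trans)
      with r1 show False by simp
    qed
    have "?Q i e"
    proof (intro conjI epos allI impI ballI)
      fix e' P J assume "0 < e'" "e' \<le> e" "P \<in> Pi UNIV Ps" "i \<in> J"
        "\<forall>i\<in>J. \<not> sdd_row (A P) i \<and> (\<forall>j. j \<notin> J \<longrightarrow> A P $ i $ j = 0)"
        "\<forall>i\<in>J. (- (A P *v U) + y P)$i \<ge> -e'"
      then show False by (rule contra)
    qed
    then show ?thesis by (rule exI)
  qed
  then have "\<forall>i. \<exists>e. ?Q i e" by (rule allI)
  then have "\<exists>ef. \<forall>i. ?Q i (ef i)" by (rule choice)
  then obtain ef where ef: "\<forall>i. ?Q i (ef i)" ..
  have pos: "\<forall>i. ef i > 0"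
  proof
    fix i
    from ef have "?Q i (ef i)" by (rule spec)
    then show "ef i > 0" by (rule conjunct1)
  qed
  define e0 where "e0 = Min (range ef)"
  have e0pos: "e0 > 0" unfolding e0_def using pos by (simp add: Min_gr_iff)
  have e0le: "e0 \<le> ef i" for i unfolding e0_def by (rule Min_le) auto
  show ?thesis
  proof (intro exI[of _ e0] conjI e0pos allI impI ballI)
    fix e P J
    assume e: "0 < e" "e \<le> e0" and P: "P \<in> Pi UNIV Ps"
      and Jc: "\<forall>i\<in>J. \<not> sdd_row (A P) i \<and> (\<forall>j. j \<notin> J \<longrightarrow> A P $ i $ j = 0)"
      and opt: "\<forall>i\<in>J. (- (A P *v U) + y P)$i \<ge> -e"
    show "J = {}"
    proof (rule ccontr)
      assume "J \<noteq> {}"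
      then obtain i where iJ: "i \<in> J" by blast
      have "e \<le> ef i" using e e0le[of i] by simp
      moreover have "?Q i (ef i)" using ef by (rule spec)
      then have H: "\<forall>e'. 0 < e' \<longrightarrow> e' \<le> ef i \<longrightarrow> (\<forall>P\<in>Pi UNIV Ps. \<forall>J. i \<in> J \<longrightarrow>
         (\<forall>i\<in>J. \<not> sdd_row (A P) i \<and> (\<forall>j. j \<notin> J \<longrightarrow> A P $ i $ j = 0)) \<longrightarrow>
         (\<forall>i\<in>J. (- (A P *v U) + y P)$i \<ge> -e') \<longrightarrow> False)" by (rule conjunct2)
      show False by (rule H[rule_format, OF e(1) \<open>e \<le> ef i\<close> P iJ Jc[rule_format] opt[rule_format]])
    qed
  qed
qed



lemma sol_le:
  fixes Ps :: "'n::finite \<Rightarrow> 'c set"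
    and A :: "('n \<Rightarrow> 'c) \<Rightarrow> real^'n^'n"
    and y :: "('n \<Rightarrow> 'c) \<Rightarrow> real^'n"
  assumes decoupled: "row_decoupled Ps A y"
    and h1: "H1 Ps A"
    and h3: "H3 Ps A"
    and h4: "H4 Ps A y"
    and U: "bellman_solution Ps A y U"
    and V: "bellman_solution Ps A y V"
  shows "U$k \<le> V$k"
proof -
  obtain e0 where e0E: "e0 > 0 \<and> (\<forall>e. 0 < e \<longrightarrow> e \<le> e0 \<longrightarrow> (\<forall>P\<in>Pi UNIV Ps. \<forall>J.
     (\<forall>i\<in>J. \<not> sdd_row (A P) i \<and> (\<forall>j. j \<notin> J \<longrightarrow> A P $ i $ j = 0)) \<longrightarrow>
     (\<forall>i\<in>J. (- (A P *v U) + y P)$i \<ge> -e) \<longrightarrow> J = {}))"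
    using eps_exists[OF h3 h4 U] ..
  note e0 = conjunct1[OF e0E]
  note E = conjunct2[OF e0E]
  obtain B where B: "\<forall>x\<in>(\<lambda>P. matrix_inv (A P)) ` {P\<in>Pi UNIV Ps. invertible (A P)}. norm x \<le> B"
    using h1 unfolding H1_def bounded_iff by blast
  define K where "K = real CARD('n) * \<bar>B\<bar>"
  have K0: "K \<ge> 0" unfolding K_def by simp
  have main: "U$k - V$k \<le> e * K" if e: "0 < e" "e \<le> e0" for e
  proof -
    have "\<forall>i. \<exists>P. P \<in> Pi UNIV Ps \<and> ereal ((- (A P *v U) + y P) $ i) > ereal (-e)"
      unfolding Bex_def[symmetric]
    proof
      fix i
      have "ereal (-e) < (SUP P\<in>Pi UNIV Ps. ereal ((- (A P *v U) + y P) $ i))"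
        using U e unfolding bellman_solution_def by simp
      then show "\<exists>P\<in>Pi UNIV Ps. ereal ((- (A P *v U) + y P) $ i) > ereal (-e)"
        by (simp add: less_SUP_iff)
    qed
    then have "\<exists>Pf. \<forall>i. Pf i \<in> Pi UNIV Ps \<and> ereal ((- (A (Pf i) *v U) + y (Pf i)) $ i) > ereal (-e)"
      by (rule choice)
    then obtain Pf where Pf0: "\<forall>i. Pf i \<in> Pi UNIV Ps \<and> ereal ((- (A (Pf i) *v U) + y (Pf i)) $ i) > ereal (-e)" ..
    have Pf: "\<And>i. Pf i \<in> Pi UNIV Ps" using Pf0 by simp
    have Pfo: "\<And>i. ereal ((- (A (Pf i) *v U) + y (Pf i)) $ i) > ereal (-e)" using Pf0 by simp
    define Q where "Q = (\<lambda>i. Pf i i)"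
    have Q: "Q \<in> Pi UNIV Ps" unfolding Q_def using Pf by (auto simp: Pi_iff)
    have rowQ: "A Q $ i = A (Pf i) $ i \<and> y Q $ i = y (Pf i) $ i" for i
    proof -
      have "Q i = Pf i i" by (simp add: Q_def)
      then show ?thesis using decoupled[unfolded row_decoupled_def, rule_format, OF Q Pf[of i]] by blast
    qed
    have optQ: "(- (A Q *v U) + y Q) $ i \<ge> -e" for i
    proof -
      have "(- (A Q *v U) + y Q) $ i = (- (A (Pf i) *v U) + y (Pf i)) $ i"
        using rowQ[of i] by (simp add: matrix_vector_mult_def)
      then show ?thesis using Pfo[of i] by simp
    qed
    have subV: "(- (A Q *v V) + y Q) $ i \<le> 0" for i
    proof -
      have "ereal ((- (A Q *v V) + y Q) $ i) \<le> (SUP P\<in>Pi UNIV Ps. ereal ((- (A P *v V) + y P) $ i))"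
        by (rule SUP_upper) (rule Q)
      also have "\<dots> = 0" using V unfolding bellman_solution_def by blast
      finally show ?thesis by simp
    qed
    have wq: "wdd (A Q)" and zq: "Z_matrix (A Q)" and dq: "\<forall>i. A Q $ i $ i \<ge> 0"
      using h3 Q unfolding H3_def by auto
    have cond: "\<forall>J. J \<noteq> {} \<longrightarrow> (\<exists>i\<in>J. sdd_row (A Q) i \<or> (\<exists>j. j \<notin> J \<and> A Q $ i $ j \<noteq> 0))"
    proof (intro allI impI)
      fix J :: "'n set" assume J: "J \<noteq> {}"
      show "\<exists>i\<in>J. sdd_row (A Q) i \<or> (\<exists>j. j \<notin> J \<and> A Q $ i $ j \<noteq> 0)"
      proof (rule ccontr)
        assume "\<not> ?thesis"
        then have Jc: "\<forall>i\<in>J. \<not> sdd_row (A Q) i \<and> (\<forall>j. j \<notin> J \<longrightarrow> A Q $ i $ j = 0)" by blast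
        have "\<forall>i\<in>J. (- (A Q *v U) + y Q)$i \<ge> -e" using optQ by blast
        then have "J = {}" using E e Q Jc by blast
        with J show False by simp
      qed
    qed
    have MP: "x $ j \<le> 0" if "\<forall>i. (A Q *v x)$i \<le> 0" for x j
      by (rule max_principle[OF wq zq dq cond that])
    have ker: "\<forall>x. A Q *v x = 0 \<longrightarrow> x = 0"
    proof (intro allI impI)
      fix x :: "real^'n" assume x: "A Q *v x = 0"
      have "x $ j = 0" for j
      proof -
        have "x $ j \<le> 0" by (rule MP) (simp add: x)
        moreover have "(- x) $ j \<le> 0" by (rule MP) (use x in \<open>simp add: matrix_vector_mult_def sum_negf vec_eq_iff\<close>)
        ultimately show ?thesis by simp
      qed
      then show "x = 0" by (simp add: vec_eq_iff)
    qed
    have inv: "invertible (A Q)"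
      using ker unfolding invertible_left_inverse matrix_left_invertible_ker .
    define Mi where "Mi = matrix_inv (A Q)"
    have AM: "A Q ** Mi = mat 1"
      using inv unfolding invertible_def Mi_def matrix_inv_def by (metis (mono_tags, lifting) someI_ex)
    define z where "z = Mi *v vec 1"
    have Az: "A Q *v z = vec 1" by (simp add: z_def matrix_vector_mul_assoc AM)
    have nMi: "norm Mi \<le> B" using B Q inv unfolding Mi_def by blast
    have zb: "\<bar>z$i\<bar> \<le> K" for i
    proof -
      have "\<bar>z$i\<bar> = \<bar>\<Sum>j\<in>UNIV. Mi$i$j\<bar>" by (simp add: z_def matrix_vector_mult_def)
      also have "\<dots> \<le> (\<Sum>j\<in>UNIV. \<bar>Mi$i$j\<bar>)" by (rule sum_abs)
      also have "\<dots> \<le> (\<Sum>j\<in>(UNIV::'n set). \<bar>B\<bar>)"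
      proof (intro sum_mono)
        fix j
        have "\<bar>Mi$i$j\<bar> \<le> norm (Mi$i)" by (rule component_le_norm_cart)
        also have "\<dots> \<le> norm Mi" by (rule Finite_Cartesian_Product.norm_nth_le)
        finally show "\<bar>Mi$i$j\<bar> \<le> \<bar>B\<bar>" using nMi by simp
      qed
      also have "\<dots> = K" by (simp add: K_def)
      finally show ?thesis .
    qed
    have Dn: "(A Q *v (U - V - e *\<^sub>R z)) $ i \<le> 0" for i
    proof -
      have eqn: "(A Q *v (U - V - e *\<^sub>R z)) $ i = (A Q *v U) $ i - (A Q *v V) $ i - e * (A Q *v z) $ i"
        by (simp add: matrix_vector_mult_def sum_subtractf sum_distrib_left sum.distrib algebra_simps)
      have "(A Q *v z) $ i = 1" using Az by simp
      then show ?thesis using eqn optQ[of i] subV[of i] by simp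
    qed
    have "(U - V - e *\<^sub>R z) $ k \<le> 0" by (rule MP) (use Dn in blast)
    then have "U$k - V$k \<le> e * z$k" by simp
    also have "\<dots> \<le> e * K" using zb[of k] e by (intro mult_left_mono) auto
    finally show ?thesis .
  qed
  show ?thesis
  proof (rule ccontr)
    assume "\<not> U$k \<le> V$k"
    then have d: "U$k - V$k > 0" by simp
    define e where "e = min e0 ((U$k - V$k) / (2 * (K + 1)))"
    have epos: "e > 0" using e0 d K0 by (simp add: e_def)
    have "U$k - V$k \<le> e * K" using main[OF epos] by (simp add: e_def)
    also have "\<dots> \<le> (U$k - V$k) / (2 * (K + 1)) * K" using K0 by (intro mult_right_mono) (auto simp: e_def)
    also have "\<dots> < U$k - V$k"
    proof -
      have kk: "K * V$k \<le> K * U$k" using d K0 by (intro mult_left_mono) auto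
      then show ?thesis using d K0 by (simp add: field_simps)
    qed
    finally show False by simp
  qed
qed

theorem theorem3p8:
  fixes Ps :: "'n::finite \<Rightarrow> 'c set"
    and A :: "('n \<Rightarrow> 'c) \<Rightarrow> real^'n^'n"
    and y :: "('n \<Rightarrow> 'c) \<Rightarrow> real^'n"
  assumes nonempty: "\<forall>i. Ps i \<noteq> {}"
    and decoupled: "row_decoupled Ps A y"
    and h1: "H1 Ps A"
    and h3: "H3 Ps A"
    and h4: "H4 Ps A y"
    and U: "bellman_solution Ps A y U"
    and V: "bellman_solution Ps A y V"
  shows "U = V"
proof -
  have "U$k \<le> V$k" for k by (rule sol_le[OF decoupled h1 h3 h4 U V])
  moreover have "V$k \<le> U$k" for k by (rule sol_le[OF decoupled h1 h3 h4 V U])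
  ultimately show ?thesis by (simp add: vec_eq_iff order_antisym)
qed

end
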